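(* Let $(\Sigma^{(n)})_{n\ge1}$ be a sequence of positive semidefinite matrices (of dimensions $d_n\times d_n$). Suppose that for each $n$ there is a covariance splitting $\Sigma^{(n)}=\Sigma_1\oplus\Sigma_2$ such that, as $n\to\infty$, $$\operatorname{rank}(\Sigma_1)=o(n),\qquad \operatorname{Tr}\Sigma_2=o(n),\qquad \frac{(\operatorname{Tr}\Sigma_2)^2}{\operatorname{Tr}(\Sigma_2^2)}=\omega(n).$$ Then for each $n$ there is a (possibly different) covariance splitting $\Sigma^{(n)}=\Sigma_1'\oplus\Sigma_2'$ such that $$\operatorname{rank}(\Sigma_1')=o(n),\quad \operatorname{Tr}\Sigma_2'=o(n),\quad \frac{\operatorname{Tr}\Sigma_2'}{\|\Sigma_2'\|_{op}}=\omega(n),\quad \frac{(\operatorname{Tr}\Sigma_2')^2}{\operatorname{Tr}((\Sigma_2')^2)}=\omega(n).$$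
   Context: Covariance splitting: $\Sigma=\Sigma_1\oplus\Sigma_2$ means $\Sigma=\Sigma_1+\Sigma_2$ with $\Sigma_1,\Sigma_2$ positive semidefinite and with orthogonal column spaces. $\|\cdot\|_{op}$ is the operator norm. *)

theory Defs
  imports "Jordan_Normal_Form.DL_Rank" "HOL-Library.Landau_Symbols"
begin

definition mat_trace :: "real mat \<Rightarrow> real" where
  "mat_trace A = (\<Sum>i<dim_row A. A $$ (i, i))"

definition psd :: "real mat \<Rightarrow> bool" where
  "psd A \<longleftrightarrow> A \<in> carrier_mat (dim_row A) (dim_row A) \<and> A\<^sup>T = A \<and>
     (\<forall>x \<in> carrier_vec (dim_row A). x \<bullet> (A *\<^sub>v x) \<ge> 0)"

definition col_space :: "real mat \<Rightarrow> real vec set" where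
  "col_space A = {A *\<^sub>v x | x. x \<in> carrier_vec (dim_col A)}"

definition cov_splitting :: "nat \<Rightarrow> real mat \<Rightarrow> real mat \<Rightarrow> real mat \<Rightarrow> bool" where
  "cov_splitting d S S1 S2 \<longleftrightarrow>
     S1 \<in> carrier_mat d d \<and> S2 \<in> carrier_mat d d \<and> psd S1 \<and> psd S2 \<and>
     S = S1 + S2 \<and> (\<forall>u \<in> col_space S1. \<forall>v \<in> col_space S2. u \<bullet> v = 0)"

definition op_norm :: "real mat \<Rightarrow> real" where
  "op_norm A = Sup {sqrt ((A *\<^sub>v x) \<bullet> (A *\<^sub>v x)) | x.
      x \<in> carrier_vec (dim_col A) \<and> x \<bullet> x \<le> 1}"

end

theory Submission imports Defs "Jordan_Normal_Form.Char_Poly" begin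


lemma real_sym_eigenvalue:
  fixes A :: "real mat"
  assumes A: "A \<in> carrier_mat n n" and sym: "A\<^sup>T = A" and n: "n > 0"
  shows "\<exists>e. eigenvalue A e"
proof -
  let ?Ac = "map_mat complex_of_real A"
  have Ac: "?Ac \<in> carrier_mat n n" using A by auto
  obtain as where cp: "char_poly ?Ac = (\<Prod>a\<leftarrow>as. [:-a,1:])" "length as = n"
    using char_poly_factorized[OF Ac] by auto
  then obtain z where z: "z \<in> set as" using n by (cases as) auto
  have "poly (char_poly ?Ac) z = 0" unfolding cp(1) using linear_poly_root[OF z] .
  hence "eigenvalue ?Ac z" using eigenvalue_root_char_poly[OF Ac] by simp
  then obtain v where ev: "eigenvector ?Ac v z" unfolding eigenvalue_def by auto
  hence v: "v \<in> carrier_vec n" "v \<noteq> 0\<^sub>v n" and Av: "?Ac *\<^sub>v v = z \<cdot>\<^sub>v v"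
    unfolding eigenvector_def using A by auto
  define N where "N = (\<Sum>i<n. cnj (v$i) * v$i)"
  define s where "s = (\<Sum>i<n. \<Sum>j<n. cnj (v$i) * complex_of_real (A$$(i,j)) * v$j)"
  have s1: "s = z * N"
  proof -
    have "s = (\<Sum>i<n. cnj (v$i) * (?Ac *\<^sub>v v)$i)"
      unfolding s_def
      by (rule sum.cong[OF refl], insert A v, auto simp: mult_mat_vec_def scalar_prod_def
           sum_distrib_left lessThan_atLeast0 mult.assoc)
    also have "\<dots> = z * N" unfolding Av N_def using v
      by (auto simp: sum_distrib_left intro!: sum.cong)
    finally show ?thesis .
  qed
  have s2: "cnj s = s"
  proof -
    have "cnj s = (\<Sum>i<n. \<Sum>j<n. v$i * complex_of_real (A$$(i,j)) * cnj (v$j))"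
      unfolding s_def by (simp add: cnj_sum)
    also have "\<dots> = (\<Sum>j<n. \<Sum>i<n. v$i * complex_of_real (A$$(i,j)) * cnj (v$j))"
      by (rule sum.swap)
    also have "\<dots> = s" unfolding s_def
    proof (rule sum.cong[OF refl], rule sum.cong[OF refl])
      fix i j assume "i \<in> {..<n}" "j \<in> {..<n}"
      hence "A$$(j,i) = A$$(i,j)" using A arg_cong[OF sym, of "\<lambda>M. M $$ (i,j)"] by auto
      thus "v $ j * complex_of_real (A $$ (j, i)) * cnj (v $ i) =
         cnj (v $ i) * complex_of_real (A $$ (i, j)) * v $ j" by simp
    qed
    finally show ?thesis .
  qed
  have Nreal: "N = complex_of_real (\<Sum>i<n. (cmod (v$i))^2)"
    unfolding N_def of_real_sum by (rule sum.cong, auto simp: complex_norm_square mult.commute simp del: of_real_power)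
  obtain i where i: "i < n" "v $ i \<noteq> 0" using v by (metis carrier_vecD eq_vecI index_zero_vec)
  have Npos: "(\<Sum>i<n. (cmod (v$i))^2) > 0"
  proof -
    have "(cmod (v$i))^2 > 0" using i by simp
    also have "(cmod (v$i))^2 \<le> (\<Sum>i<n. (cmod (v$i))^2)"
      by (rule member_le_sum, insert i, auto)
    finally show ?thesis .
  qed
  have "cnj z = z"
  proof -
    have "cnj z * N = z * N" using s1 s2 Nreal by (metis complex_cnj_complex_of_real complex_cnj_mult)
    moreover have "N \<noteq> 0" using Npos unfolding Nreal of_real_eq_0_iff by linarith
    ultimately show ?thesis by simp
  qed
  hence zr: "z = complex_of_real (Re z)" by (metis Reals_cnj_iff complex_is_Real_iff of_real_Re)
  have "poly (char_poly ?Ac) (complex_of_real (Re z)) = 0" using \<open>poly (char_poly ?Ac) z = 0\<close> zr by simp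
  hence "complex_of_real (poly (char_poly A) (Re z)) = 0"
    unfolding of_real_hom.char_poly_hom[OF A] of_real_hom.poly_map_poly .
  hence "poly (char_poly A) (Re z) = 0" by simp
  thus ?thesis using eigenvalue_root_char_poly[OF A] by blast
qed




lemma sum_delta_l: "(\<Sum>k = 0..<(n::nat). (if i = k then 1 else 0) * (f k :: real)) = (if i < n then f i else 0)"
proof -
  have eq: "\<And>k. (if i = k then 1 else 0) * f k = (if i = k then f k else 0)" by simp
  show ?thesis unfolding eq by (simp add: sum.delta')
qed

lemma sum_delta_r: "(\<Sum>k = 0..<(n::nat). (if k = j then 1 else 0) * (f k :: real)) = (if j < n then f j else 0)"
proof -
  have eq: "\<And>k. (if k = j then 1 else 0) * f k = (if j = k then f k else 0)" by simp
  show ?thesis unfolding eq by (simp add: sum.delta')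
qed

lemma householder:
  fixes u :: "real vec"
  assumes u: "u \<in> carrier_vec n" and uu: "u \<bullet> u = 1" and n: "n > 0"
  shows "\<exists>H \<in> carrier_mat n n. H\<^sup>T = H \<and> H * H = 1\<^sub>m n \<and> H *\<^sub>v unit_vec n 0 = u"
proof (cases "\<forall>i<n. u$i = (if i = 0 then 1 else 0)")
  case True
  have "u = unit_vec n 0" by (rule eq_vecI, insert True u, auto simp: unit_vec_def)
  thus ?thesis by (intro bexI[of _ "1\<^sub>m n"]) auto
next
  case False
  define w where "w = (\<lambda>i. (if i = 0 then 1 else 0) - u$i :: real)"
  have uu': "(\<Sum>i = 0..<n. u$i * u$i) = 1" using uu u by (simp add: scalar_prod_def)
  have ww: "(\<Sum>i = 0..<n. w i * w i) = 2 * w 0"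
  proof -
    have "(\<Sum>i = 0..<n. w i * w i) = (\<Sum>i = 0..<n. (if i = 0 then 1 - 2 * u$0 else 0) + u$i * u$i)"
      unfolding w_def by (rule sum.cong, auto simp: algebra_simps)
    also have "\<dots> = 1 - 2 * u$0 + 1" using n uu' by (simp add: sum.distrib)
    finally show ?thesis unfolding w_def by simp
  qed
  have wpos: "(\<Sum>i = 0..<n. w i * w i) > 0"
  proof -
    from False obtain i where i: "i < n" "w i \<noteq> 0" unfolding w_def by auto
    have "0 < w i * w i" using i not_real_square_gt_zero by blast
    also have "\<dots> \<le> (\<Sum>i = 0..<n. w i * w i)" by (rule member_le_sum, insert i, auto)
    finally show ?thesis .
  qed
  define c where "c = 2 / (\<Sum>i = 0..<n. w i * w i)"
  have cw0: "c * w 0 = 1" unfolding c_def ww using wpos ww by auto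
  have cww: "c * c * (\<Sum>i = 0..<n. w i * w i) = 2 * c" unfolding c_def using wpos by simp
  have cS: "c * (\<Sum>k = 0..<n. w k * w k) = 2" unfolding c_def using wpos by simp
  define H where "H = mat n n (\<lambda>(i,j). (if i = j then 1 else 0) - c * w i * w j)"
  have H: "H \<in> carrier_mat n n" unfolding H_def by auto
  have "H\<^sup>T = H" unfolding H_def by (rule eq_matI, auto)
  moreover have "H * H = 1\<^sub>m n"
  proof (rule eq_matI)
    fix i j assume ij: "i < dim_row (1\<^sub>m n)" "j < dim_col (1\<^sub>m n)"
    hence ij: "i < n" "j < n" by auto
    have "(H * H) $$ (i,j) = (\<Sum>k = 0..<n. ((if i = k then 1 else 0) - c * w i * w k) * ((if k = j then 1 else 0) - c * w k * w j))"
      using ij unfolding H_def by (simp add: scalar_prod_def)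
    also have "\<dots> = (\<Sum>k = 0..<n. (if i = k then 1 else 0) * (if k = j then 1 else 0)
       - (if i = k then 1 else 0) * (c * w k * w j) - (c * w i) * ((if k = j then 1 else 0) * w k)
       + (c * c * w i * w j) * (w k * w k))"
      by (rule sum.cong, auto simp: algebra_simps)
    also have "\<dots> = (if i = j then 1 else 0) - c * w i * w j - c * w i * w j
       + (c * c * w i * w j) * (\<Sum>k = 0..<n. w k * w k)"
      using ij by (simp only: sum.distrib sum_subtractf sum_distrib_left[symmetric] sum_delta_l sum_delta_r, simp)
    also have "\<dots> = (if i = j then 1 else 0)"
      using cS by (simp add: algebra_simps)
    finally show "(H * H) $$ (i,j) = 1\<^sub>m n $$ (i,j)" using ij by simp
  qed (auto simp: H_def)
  moreover have "H *\<^sub>v unit_vec n 0 = u"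
  proof (rule eq_vecI)
    fix i assume "i < dim_vec u"
    hence i: "i < n" using u by auto
    have "(H *\<^sub>v unit_vec n 0) $ i = H $$ (i, 0)"
      using i n unfolding H_def by (simp add: scalar_prod_def unit_vec_def if_distrib cong: if_cong)
    also have "\<dots> = (if i = 0 then 1 else 0) - (c * w 0) * w i" unfolding H_def using i n by simp
    also have "\<dots> = (if i = 0 then 1 else 0) - w i" using cw0 by simp
    also have "\<dots> = u $ i" unfolding w_def by simp
    finally show "(H *\<^sub>v unit_vec n 0) $ i = u $ i" .
  qed (insert u H, auto)
  ultimately show ?thesis using H by blast
qed



definition diagm :: "nat \<Rightarrow> (nat \<Rightarrow> real) \<Rightarrow> real mat" where
  "diagm n l = mat n n (\<lambda>(i,j). if i = j then l i else 0)"

lemma diagm_carrier[simp]: "diagm n l \<in> carrier_mat n n" unfolding diagm_def by auto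

lemma spectral:
  fixes A :: "real mat"
  assumes "A \<in> carrier_mat n n" and "A\<^sup>T = A"
  shows "\<exists>Q l. Q \<in> carrier_mat n n \<and> Q\<^sup>T * Q = 1\<^sub>m n \<and> Q * Q\<^sup>T = 1\<^sub>m n \<and> Q\<^sup>T * A * Q = diagm n l"
  using assms
proof (induction n arbitrary: A)
  case 0
  show ?case by (intro exI[of _ "1\<^sub>m 0"] exI[of _ "\<lambda>_. 0"], insert 0, auto intro!: eq_matI simp: diagm_def)
next
  case (Suc m A)
  let ?n = "Suc m"
  have A: "A \<in> carrier_mat ?n ?n" and sym: "A\<^sup>T = A" using Suc by auto
  obtain e where "eigenvalue A e" using real_sym_eigenvalue[OF A sym] by auto
  then obtain v where ev: "eigenvector A v e" unfolding eigenvalue_def by auto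
  hence v: "v \<in> carrier_vec ?n" "v \<noteq> 0\<^sub>v ?n" and Av: "A *\<^sub>v v = e \<cdot>\<^sub>v v"
    unfolding eigenvector_def using A by auto
  have vv: "v \<bullet> v > 0"
  proof -
    obtain i where i: "i < ?n" "v $ i \<noteq> 0" using v by (metis carrier_vecD eq_vecI index_zero_vec)
    have "0 < v$i * v$i" using i not_real_square_gt_zero by blast
    also have "\<dots> \<le> v \<bullet> v" unfolding scalar_prod_def using v i
      by (intro member_le_sum) auto
    finally show ?thesis .
  qed
  define u where "u = (1 / sqrt (v \<bullet> v)) \<cdot>\<^sub>v v"
  have u: "u \<in> carrier_vec ?n" unfolding u_def using v by auto
  have uu: "u \<bullet> u = 1" unfolding u_def using v vv
    by (simp add: smult_scalar_prod_distrib[of _ ?n] scalar_prod_smult_distrib[of _ ?n])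
  have Au: "A *\<^sub>v u = e \<cdot>\<^sub>v u" unfolding u_def using v A Av
    by (simp add: mult_mat_vec[of _ ?n ?n] smult_smult_assoc mult.commute)
  obtain H where H: "H \<in> carrier_mat ?n ?n" and Hs: "H\<^sup>T = H" and HH: "H * H = 1\<^sub>m ?n"
    and He: "H *\<^sub>v unit_vec ?n 0 = u" using householder[OF u uu] by auto
  define A' where "A' = H * A * H"
  have A': "A' \<in> carrier_mat ?n ?n" unfolding A'_def using H A by auto
  have A'e: "A' *\<^sub>v unit_vec ?n 0 = e \<cdot>\<^sub>v unit_vec ?n 0"
  proof -
    have "A' *\<^sub>v unit_vec ?n 0 = H *\<^sub>v (A *\<^sub>v (H *\<^sub>v unit_vec ?n 0))"
      unfolding A'_def
      by (simp only: assoc_mult_mat_vec[OF mult_carrier_mat[OF H A] H unit_vec_carrier]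
           assoc_mult_mat_vec[OF H A mult_mat_vec_carrier[OF H unit_vec_carrier]])
    also have "\<dots> = e \<cdot>\<^sub>v (H *\<^sub>v (H *\<^sub>v unit_vec ?n 0))" unfolding He Au
      using H u He by (simp add: mult_mat_vec[of _ ?n ?n])
    also have "H *\<^sub>v (H *\<^sub>v unit_vec ?n 0) = unit_vec ?n 0" 
      using H by (simp add: assoc_mult_mat_vec[of _ ?n ?n, symmetric] HH)
    finally show ?thesis .
  qed
  have A's: "A'\<^sup>T = A'"
  proof -
    have "A'\<^sup>T = H\<^sup>T * (A\<^sup>T * H\<^sup>T)" unfolding A'_def
      by (simp only: transpose_mult[OF mult_carrier_mat[OF H A] H] transpose_mult[OF H A])
    also have "\<dots> = A'" unfolding Hs sym A'_def using H A by simp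
    finally show ?thesis .
  qed
  have col0: "\<And>i. i < ?n \<Longrightarrow> A' $$ (i, 0) = (if i = 0 then e else 0)"
  proof -
    fix i assume i: "i < ?n"
    have "A' $$ (i, 0) = (A' *\<^sub>v unit_vec ?n 0) $ i" using A' i
      by (simp add: scalar_prod_right_unit[of _ ?n])
    thus "A' $$ (i, 0) = (if i = 0 then e else 0)" unfolding A'e using i by simp
  qed
  have row0: "\<And>j. j < ?n \<Longrightarrow> A' $$ (0, j) = (if j = 0 then e else 0)"
  proof -
    fix j assume j: "j < ?n"
    have "A' $$ (0, j) = A'\<^sup>T $$ (j, 0)" using j A' by simp
    thus "A' $$ (0, j) = (if j = 0 then e else 0)" unfolding A's using col0[OF j] by simp
  qed
  define A3 where "A3 = mat m m (\<lambda>(i,j). A' $$ (Suc i, Suc j))"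
  have A3: "A3 \<in> carrier_mat m m" unfolding A3_def by auto
  have A3s: "A3\<^sup>T = A3"
  proof (rule eq_matI)
    fix i j assume "i < dim_row A3" "j < dim_col A3"
    hence ij: "i < m" "j < m" unfolding A3_def by auto
    have "A' $$ (Suc j, Suc i) = A'\<^sup>T $$ (Suc i, Suc j)" using ij A' by simp
    thus "A3\<^sup>T $$ (i, j) = A3 $$ (i, j)" unfolding A's A3_def using ij by simp
  qed (auto simp: A3_def)
  obtain Q3 l3 where Q3: "Q3 \<in> carrier_mat m m" and Q3o: "Q3\<^sup>T * Q3 = 1\<^sub>m m" "Q3 * Q3\<^sup>T = 1\<^sub>m m"
    and Q3d: "Q3\<^sup>T * A3 * Q3 = diagm m l3" using Suc.IH[OF A3 A3s] by auto
  define E where "E = mat 1 1 (\<lambda>_. e)"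
  have E: "E \<in> carrier_mat 1 1" unfolding E_def by auto
  have A'b: "A' = four_block_mat E (0\<^sub>m 1 m) (0\<^sub>m m 1) A3"
  proof (rule eq_matI)
    fix i j assume "i < dim_row (four_block_mat E (0\<^sub>m 1 m) (0\<^sub>m m 1) A3)"
      "j < dim_col (four_block_mat E (0\<^sub>m 1 m) (0\<^sub>m m 1) A3)"
    hence ij: "i < ?n" "j < ?n" using E A3 by auto
    show "A' $$ (i, j) = four_block_mat E (0\<^sub>m 1 m) (0\<^sub>m m 1) A3 $$ (i, j)"
      using ij E A3 col0[OF ij(1)] row0[OF ij(2)]
      by (cases i; cases j; auto simp: E_def A3_def)
  qed (insert A' E A3, auto)
  define P where "P = four_block_mat (1\<^sub>m 1) (0\<^sub>m 1 m) (0\<^sub>m m 1) Q3"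
  have P: "P \<in> carrier_mat ?n ?n" unfolding P_def using Q3 by auto
  have PT: "P\<^sup>T = four_block_mat (1\<^sub>m 1) (0\<^sub>m 1 m) (0\<^sub>m m 1) Q3\<^sup>T"
    unfolding P_def using Q3 by (simp add: transpose_four_block_mat[OF one_carrier_mat zero_carrier_mat zero_carrier_mat Q3])
  have PP: "P\<^sup>T * P = 1\<^sub>m ?n" unfolding PT unfolding P_def using Q3 Q3o
    by (subst mult_four_block_mat, auto)
  have PP2: "P * P\<^sup>T = 1\<^sub>m ?n" unfolding PT unfolding P_def using Q3 Q3o
    by (subst mult_four_block_mat, auto)
  define l where "l = (\<lambda>i. if i = 0 then e else l3 (i - 1))"
  have PAP: "P\<^sup>T * A' * P = diagm ?n l"
  proof -
    have "P\<^sup>T * A' = four_block_mat E (0\<^sub>m 1 m) (0\<^sub>m m 1) (Q3\<^sup>T * A3)"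
      unfolding PT A'b using Q3 E A3
      by (subst mult_four_block_mat, auto)
    also have "\<dots> * P = four_block_mat E (0\<^sub>m 1 m) (0\<^sub>m m 1) (Q3\<^sup>T * A3 * Q3)"
      unfolding P_def using Q3 E A3
      by (subst mult_four_block_mat, auto)
    also have "\<dots> = diagm ?n l" unfolding Q3d
      by (rule eq_matI, auto simp: diagm_def l_def E_def)
    finally show ?thesis .
  qed
  define Q where "Q = H * P"
  have Q: "Q \<in> carrier_mat ?n ?n" unfolding Q_def using H P by auto
  have QT: "Q\<^sup>T = P\<^sup>T * H" unfolding Q_def using transpose_mult[OF H P] Hs by simp
  have PT': "P\<^sup>T \<in> carrier_mat ?n ?n" using P by auto
  have "Q\<^sup>T * Q = P\<^sup>T * (H * H) * P" unfolding QT unfolding Q_def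
    by (simp add: assoc_mult_mat[OF PT' H mult_carrier_mat[OF H P]] assoc_mult_mat[OF PT' mult_carrier_mat[OF H H] P] assoc_mult_mat[OF H H P])
  hence o1: "Q\<^sup>T * Q = 1\<^sub>m ?n" unfolding HH using PP P PT' by simp
  have "Q * Q\<^sup>T = H * (P * P\<^sup>T) * H" unfolding QT unfolding Q_def
    by (simp add: assoc_mult_mat[OF H P mult_carrier_mat[OF PT' H]] assoc_mult_mat[OF P PT' H]
     assoc_mult_mat[OF H mult_carrier_mat[OF P PT'] H])
  hence o2: "Q * Q\<^sup>T = 1\<^sub>m ?n" unfolding PP2 using HH H by simp
  have "Q\<^sup>T * A * Q = P\<^sup>T * A' * P" unfolding QT unfolding Q_def A'_def
    by (simp add: assoc_mult_mat[OF PT' H A] assoc_mult_mat[OF PT' mult_carrier_mat[OF H A] mult_carrier_mat[OF H P]]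
      assoc_mult_mat[OF PT' mult_carrier_mat[OF mult_carrier_mat[OF H A] H] P]
      assoc_mult_mat[OF H A H] assoc_mult_mat[OF A H P] assoc_mult_mat[OF H A mult_carrier_mat[OF H P]]
      assoc_mult_mat[OF PT' H mult_carrier_mat[OF A mult_carrier_mat[OF H P]]]
      assoc_mult_mat[OF H mult_carrier_mat[OF A H] P]
      assoc_mult_mat[OF PT' mult_carrier_mat[OF H mult_carrier_mat[OF A H]] P])
  hence "Q\<^sup>T * A * Q = diagm ?n l" unfolding PAP .
  thus ?case using Q o1 o2 by blast
qed


lemma diagm_mult: "diagm n f * diagm n g = diagm n (\<lambda>i. f i * g i)"
proof (rule eq_matI)
  fix i j assume "i < dim_row (diagm n (\<lambda>i. f i * g i))" "j < dim_col (diagm n (\<lambda>i. f i * g i))"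
  hence ij: "i < n" "j < n" by (auto simp: diagm_def)
  have "(diagm n f * diagm n g) $$ (i,j) = (\<Sum>k = 0..<n. (if i = k then f i else 0) * (if k = j then g k else 0))"
    using ij by (simp add: diagm_def scalar_prod_def)
  also have "\<dots> = (\<Sum>k = 0..<n. if i = k then (if k = j then f i * g k else 0) else 0)"
    by (rule sum.cong, auto)
  also have "\<dots> = (if i = j then f i * g i else 0)" using ij by (subst sum.delta', auto)
  finally show "(diagm n f * diagm n g) $$ (i,j) = diagm n (\<lambda>i. f i * g i) $$ (i,j)"
    using ij by (simp add: diagm_def)
qed (auto simp: diagm_def)

lemma diagm_add: "diagm n f + diagm n g = diagm n (\<lambda>i. f i + g i)"
  by (rule eq_matI, auto simp: diagm_def)

lemma diagm_T: "(diagm n f)\<^sup>T = diagm n f"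
  by (rule eq_matI, auto simp: diagm_def)

lemma trace_comm:
  assumes "A \<in> carrier_mat n m" "B \<in> carrier_mat m n"
  shows "mat_trace (A * B) = mat_trace (B * A)"
proof -
  have "mat_trace (A * B) = (\<Sum>i<n. \<Sum>k<m. A $$ (i,k) * B $$ (k,i))"
    unfolding mat_trace_def using assms by (auto simp: scalar_prod_def lessThan_atLeast0 intro!: sum.cong)
  also have "\<dots> = (\<Sum>k<m. \<Sum>i<n. B $$ (k,i) * A $$ (i,k))" by (subst sum.swap) (simp add: mult.commute)
  also have "\<dots> = mat_trace (B * A)"
    unfolding mat_trace_def using assms by (auto simp: scalar_prod_def lessThan_atLeast0 intro!: sum.cong)
  finally show ?thesis .
qed

lemma trace_diagm: "mat_trace (diagm n f) = (\<Sum>i<n. f i)"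
  unfolding mat_trace_def diagm_def by auto

lemma quad_congr:
  fixes Q M :: "real mat"
  assumes Q: "Q \<in> carrier_mat n n" and M: "M \<in> carrier_mat n n" and x: "x \<in> carrier_vec n"
  shows "x \<bullet> ((Q\<^sup>T * M * Q) *\<^sub>v x) = (Q *\<^sub>v x) \<bullet> (M *\<^sub>v (Q *\<^sub>v x))"
proof -
  have QT: "Q\<^sup>T \<in> carrier_mat n n" using Q by auto
  have e: "(Q\<^sup>T * M * Q) *\<^sub>v x = Q\<^sup>T *\<^sub>v (M *\<^sub>v (Q *\<^sub>v x))"
    by (simp only: assoc_mult_mat_vec[OF mult_carrier_mat[OF QT M] Q x]
        assoc_mult_mat_vec[OF QT M mult_mat_vec_carrier[OF Q x]])
  have "x \<bullet> ((Q\<^sup>T * M * Q) *\<^sub>v x) = (Q\<^sup>T *\<^sub>v (M *\<^sub>v (Q *\<^sub>v x))) \<bullet> x" unfolding e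
    by (rule comm_scalar_prod[OF x], insert Q M x, auto)
  also have "\<dots> = (M *\<^sub>v (Q *\<^sub>v x)) \<bullet> (Q *\<^sub>v x)"
    by (rule transpose_vec_mult_scalar[OF Q x], insert Q M x, auto)
  also have "\<dots> = (Q *\<^sub>v x) \<bullet> (M *\<^sub>v (Q *\<^sub>v x))"
    by (rule comm_scalar_prod[of _ n], insert Q M x, auto)
  finally show ?thesis .
qed

lemma quad_diagm:
  assumes x: "x \<in> carrier_vec n"
  shows "x \<bullet> (diagm n f *\<^sub>v x) = (\<Sum>i<n. f i * (x$i)^2)"
proof -
  have "diagm n f *\<^sub>v x = vec n (\<lambda>i. f i * x$i)"
  proof (rule eq_vecI)
    fix i assume "i < dim_vec (vec n (\<lambda>i. f i * x $ i))"
    hence i: "i < n" by simp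
    have "(diagm n f *\<^sub>v x) $ i = (\<Sum>k = 0..<n. (if i = k then f i else 0) * x $ k)"
      using i x by (simp add: diagm_def scalar_prod_def)
    also have "\<dots> = (\<Sum>k = 0..<n. if i = k then f i * x$k else 0)" by (rule sum.cong, auto)
    also have "\<dots> = f i * x$i" using i by (subst sum.delta', auto)
    finally show "(diagm n f *\<^sub>v x) $ i = vec n (\<lambda>i. f i * x $ i) $ i" using i by simp
  qed (auto simp: diagm_def)
  thus ?thesis using x by (auto simp: scalar_prod_def lessThan_atLeast0 power2_eq_square intro!: sum.cong)
qed

lemma psd_QDQ:
  fixes Q :: "real mat"
  assumes Q: "Q \<in> carrier_mat n n" and f: "\<And>i. i < n \<Longrightarrow> f i \<ge> 0"
  shows "psd (Q * diagm n f * Q\<^sup>T)"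
proof -
  let ?M = "Q * diagm n f * Q\<^sup>T"
  have QT: "Q\<^sup>T \<in> carrier_mat n n" using Q by auto
  have M: "?M \<in> carrier_mat n n" using Q by auto
  have "?M\<^sup>T = ?M"
    by (simp only: transpose_mult[OF mult_carrier_mat[OF Q diagm_carrier] QT]
        transpose_mult[OF Q diagm_carrier] diagm_T transpose_transpose, rule assoc_mult_mat[OF Q diagm_carrier QT, symmetric])
  moreover have "x \<bullet> (?M *\<^sub>v x) \<ge> 0" if x: "x \<in> carrier_vec n" for x
  proof -
    have "x \<bullet> (?M *\<^sub>v x) = (Q\<^sup>T *\<^sub>v x) \<bullet> (diagm n f *\<^sub>v (Q\<^sup>T *\<^sub>v x))"
      using quad_congr[OF QT diagm_carrier x, of f] by simp
    also have "\<dots> \<ge> 0" using Q f x by (subst quad_diagm[of _ n], auto intro!: sum_nonneg)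
    finally show ?thesis .
  qed
  ultimately show ?thesis unfolding psd_def using M by auto
qed



lemma diagm_mult_vec: assumes x: "x \<in> carrier_vec n"
  shows "diagm n f *\<^sub>v x = vec n (\<lambda>i. f i * x$i)"
proof (rule eq_vecI)
  fix i assume "i < dim_vec (vec n (\<lambda>i. f i * x $ i))"
  hence i: "i < n" by simp
  have "(diagm n f *\<^sub>v x) $ i = (\<Sum>k = 0..<n. (if i = k then f i else 0) * x $ k)"
    using i x by (simp add: diagm_def scalar_prod_def)
  also have "\<dots> = (\<Sum>k = 0..<n. if i = k then f i * x$k else 0)" by (rule sum.cong, auto)
  also have "\<dots> = f i * x$i" using i by (subst sum.delta', auto)
  finally show "(diagm n f *\<^sub>v x) $ i = vec n (\<lambda>i. f i * x $ i) $ i" using i by simp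
qed (auto simp: diagm_def)

lemma psd_add: assumes "psd A" "psd B" "A \<in> carrier_mat n n" "B \<in> carrier_mat n n"
  shows "psd (A + B)"
proof -
  have "x \<bullet> ((A + B) *\<^sub>v x) \<ge> 0" if x: "x \<in> carrier_vec n" for x
  proof -
    have "x \<bullet> ((A + B) *\<^sub>v x) = x \<bullet> (A *\<^sub>v x) + x \<bullet> (B *\<^sub>v x)"
      using assms x by (simp add: add_mult_distrib_mat_vec[of _ n n] scalar_prod_add_distrib[of _ n])
    thus ?thesis using assms x unfolding psd_def by auto
  qed
  thus ?thesis using assms unfolding psd_def by (auto simp: transpose_add[of _ n n])
qed

context
  fixes Q :: "real mat" and d :: nat
  assumes Q: "Q \<in> carrier_mat d d" and QQ1: "Q\<^sup>T * Q = 1\<^sub>m d" and QQ2: "Q * Q\<^sup>T = 1\<^sub>m d"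
begin

lemma QT: "Q\<^sup>T \<in> carrier_mat d d" using Q by auto

lemma QD_mult: "(Q * diagm d f * Q\<^sup>T) * (Q * diagm d g * Q\<^sup>T) = Q * diagm d (\<lambda>i. f i * g i) * Q\<^sup>T"
proof -
  note D = diagm_carrier[of d]
  have "(Q * diagm d f * Q\<^sup>T) * (Q * diagm d g * Q\<^sup>T) = (Q * diagm d f) * (Q\<^sup>T * (Q * diagm d g * Q\<^sup>T))"
    by (rule assoc_mult_mat[OF mult_carrier_mat[OF Q D] QT mult_carrier_mat[OF mult_carrier_mat[OF Q D] QT]])
  also have "Q\<^sup>T * (Q * diagm d g * Q\<^sup>T) = (Q\<^sup>T * Q) * diagm d g * Q\<^sup>T"
    by (simp only: assoc_mult_mat[OF QT Q D] assoc_mult_mat[OF QT mult_carrier_mat[OF Q D] QT]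
        assoc_mult_mat[OF mult_carrier_mat[OF QT Q] D QT] assoc_mult_mat[OF Q D QT])
  also have "\<dots> = diagm d g * Q\<^sup>T" unfolding QQ1 using left_mult_one_mat[OF D] by simp
  also have "(Q * diagm d f) * (diagm d g * Q\<^sup>T) = Q * (diagm d f * diagm d g) * Q\<^sup>T"
    by (simp only: assoc_mult_mat[OF Q D mult_carrier_mat[OF D QT]] assoc_mult_mat[OF Q mult_carrier_mat[OF D D] QT]
         assoc_mult_mat[OF D D QT])
  finally show ?thesis unfolding diagm_mult .
qed

lemma QD_add: "Q * diagm d f * Q\<^sup>T + Q * diagm d g * Q\<^sup>T = Q * diagm d (\<lambda>i. f i + g i) * Q\<^sup>T"
  unfolding diagm_add[symmetric]
  by (simp only: mult_add_distrib_mat[OF Q diagm_carrier diagm_carrier]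
     add_mult_distrib_mat[OF mult_carrier_mat[OF Q diagm_carrier] mult_carrier_mat[OF Q diagm_carrier] QT])

lemma QD_trace: "mat_trace (Q * diagm d f * Q\<^sup>T) = (\<Sum>i<d. f i)"
proof -
  have "mat_trace (Q * diagm d f * Q\<^sup>T) = mat_trace (Q\<^sup>T * (Q * diagm d f))"
    by (rule trace_comm[of _ d d], insert Q, auto)
  also have "Q\<^sup>T * (Q * diagm d f) = diagm d f"
    by (simp only: assoc_mult_mat[OF QT Q diagm_carrier, symmetric] QQ1 left_mult_one_mat[OF diagm_carrier])
  finally show ?thesis by (simp add: trace_diagm)
qed

lemma QD_vec: "x \<in> carrier_vec d \<Longrightarrow> (Q * diagm d f * Q\<^sup>T) *\<^sub>v x = Q *\<^sub>v (diagm d f *\<^sub>v (Q\<^sup>T *\<^sub>v x))"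
  using Q QT
  by (simp only: assoc_mult_mat_vec[OF mult_carrier_mat[OF Q diagm_carrier] QT]
        assoc_mult_mat_vec[OF Q diagm_carrier mult_mat_vec_carrier[OF QT]])

lemma Q_pres: "y \<in> carrier_vec d \<Longrightarrow> z \<in> carrier_vec d \<Longrightarrow> (Q *\<^sub>v y) \<bullet> (Q *\<^sub>v z) = y \<bullet> z"
proof -
  assume y: "y \<in> carrier_vec d" and z: "z \<in> carrier_vec d"
  have "(Q\<^sup>T *\<^sub>v (Q *\<^sub>v y)) \<bullet> z = (Q *\<^sub>v y) \<bullet> (Q *\<^sub>v z)"
    by (rule transpose_vec_mult_scalar[OF Q z], insert Q y, auto)
  moreover have "Q\<^sup>T *\<^sub>v (Q *\<^sub>v y) = y"
    using Q QT y by (simp add: assoc_mult_mat_vec[OF QT Q y, symmetric] QQ1)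
  ultimately show ?thesis by simp
qed

lemma QT_pres: "y \<in> carrier_vec d \<Longrightarrow> z \<in> carrier_vec d \<Longrightarrow> (Q\<^sup>T *\<^sub>v y) \<bullet> (Q\<^sup>T *\<^sub>v z) = y \<bullet> z"
proof -
  assume y: "y \<in> carrier_vec d" and z: "z \<in> carrier_vec d"
  have "((Q\<^sup>T)\<^sup>T *\<^sub>v (Q\<^sup>T *\<^sub>v y)) \<bullet> z = (Q\<^sup>T *\<^sub>v y) \<bullet> (Q\<^sup>T *\<^sub>v z)"
    by (rule transpose_vec_mult_scalar[OF QT z], insert Q y, auto)
  moreover have "(Q\<^sup>T)\<^sup>T *\<^sub>v (Q\<^sup>T *\<^sub>v y) = y"
    using Q QT y by (simp add: assoc_mult_mat_vec[OF Q QT y, symmetric] QQ2)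
  ultimately show ?thesis by simp
qed

end


lemma rank_sum_mat:
  fixes g :: "nat \<Rightarrow> nat \<Rightarrow> nat \<Rightarrow> real"
  assumes fin: "finite K"
    and r1: "\<And>k. vec_space.rank d (mat d d (\<lambda>(r,c). g k r c)) \<le> 1"
  shows "vec_space.rank d (mat d d (\<lambda>(r,c). \<Sum>k\<in>K. g k r c)) \<le> card K"
  using fin
proof (induction K rule: finite_induct)
  case empty
  have eq: "mat d d (\<lambda>(r,c). \<Sum>k\<in>{}. g k r c) = 0\<^sub>m d d" by (rule eq_matI, auto)
  show ?case unfolding eq using vec_space.rank_0I[of d d] by simp
next
  case (insert k K)
  have "mat d d (\<lambda>(r,c). \<Sum>k\<in>insert k K. g k r c) = mat d d (\<lambda>(r,c). g k r c) + mat d d (\<lambda>(r,c). \<Sum>k\<in>K. g k r c)"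
    by (rule eq_matI, insert insert, auto)
  hence "vec_space.rank d (mat d d (\<lambda>(r,c). \<Sum>k\<in>insert k K. g k r c)) \<le>
     vec_space.rank d (mat d d (\<lambda>(r,c). g k r c)) + vec_space.rank d (mat d d (\<lambda>(r,c). \<Sum>k\<in>K. g k r c))"
    using vec_space.rank_subadditive[of "mat d d (\<lambda>(r,c). g k r c)" d d] by auto
  also have "\<dots> \<le> 1 + card K" using r1[of k] insert by linarith
  finally show ?case using insert by simp
qed

lemma rank_QDQ:
  fixes Q :: "real mat"
  assumes Q: "Q \<in> carrier_mat d d"
  shows "vec_space.rank d (Q * diagm d f * Q\<^sup>T) \<le> card {k. k < d \<and> f k \<noteq> 0}"
proof -
  let ?K = "{k. k < d \<and> f k \<noteq> 0}"
  have QD: "Q * diagm d f = mat d d (\<lambda>(r,k). Q$$(r,k) * f k)"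
  proof (rule eq_matI)
    fix r k assume "r < dim_row (mat d d (\<lambda>(r, k). Q $$ (r, k) * f k))" "k < dim_col (mat d d (\<lambda>(r, k). Q $$ (r, k) * f k))"
    hence rk: "r < d" "k < d" by auto
    have "(Q * diagm d f) $$ (r,k) = (\<Sum>j = 0..<d. Q$$(r,j) * (if j = k then f j else 0))"
      using rk Q by (simp add: diagm_def scalar_prod_def)
    also have "\<dots> = (\<Sum>j = 0..<d. if j = k then Q$$(r,j) * f j else 0)" by (rule sum.cong, auto)
    also have "\<dots> = Q$$(r,k) * f k" using rk by (subst sum.delta, auto)
    finally show "(Q * diagm d f) $$ (r,k) = mat d d (\<lambda>(r, k). Q $$ (r, k) * f k) $$ (r,k)" using rk by simp
  qed (insert Q, auto simp: diagm_def)
  have eq: "Q * diagm d f * Q\<^sup>T = mat d d (\<lambda>(r,c). \<Sum>k\<in>?K. Q$$(r,k) * f k * Q$$(c,k))"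
  proof (rule eq_matI)
    fix r c assume "r < dim_row (mat d d (\<lambda>(r,c). \<Sum>k\<in>?K. Q$$(r,k) * f k * Q$$(c,k)))"
      "c < dim_col (mat d d (\<lambda>(r,c). \<Sum>k\<in>?K. Q$$(r,k) * f k * Q$$(c,k)))"
    hence rc: "r < d" "c < d" by auto
    have "(Q * diagm d f * Q\<^sup>T) $$ (r,c) = (\<Sum>k = 0..<d. Q$$(r,k) * f k * Q$$(c,k))"
      unfolding QD using rc Q by (simp add: scalar_prod_def)
    also have "\<dots> = (\<Sum>k\<in>?K. Q$$(r,k) * f k * Q$$(c,k))"
      by (rule sum.mono_neutral_right, auto)
    finally show "(Q * diagm d f * Q\<^sup>T) $$ (r,c) = mat d d (\<lambda>(r,c). \<Sum>k\<in>?K. Q$$(r,k) * f k * Q$$(c,k)) $$ (r,c)"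
      using rc by simp
  qed (insert Q, auto)
  show ?thesis unfolding eq
  proof (rule rank_sum_mat)
    fix k
    show "vec_space.rank d (mat d d (\<lambda>(r, c). Q $$ (r, k) * f k * Q $$ (c, k))) \<le> 1"
      by (rule vec_space.rank_le_1_product_entries[of _ d d "\<lambda>r. Q $$ (r, k) * f k" "\<lambda>c. Q $$ (c, k)"], auto)
  qed auto
qed



context
  fixes Q :: "real mat" and d :: nat
  assumes Q: "Q \<in> carrier_mat d d" and QQ1: "Q\<^sup>T * Q = 1\<^sub>m d" and QQ2: "Q * Q\<^sup>T = 1\<^sub>m d"
begin

lemma QD_norm2: assumes x: "x \<in> carrier_vec d"
  shows "((Q * diagm d g * Q\<^sup>T) *\<^sub>v x) \<bullet> ((Q * diagm d g * Q\<^sup>T) *\<^sub>v x) = (\<Sum>i<d. (g i)^2 * ((Q\<^sup>T *\<^sub>v x)$i)^2)"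
proof -
  have QT: "Q\<^sup>T \<in> carrier_mat d d" using Q by auto
  let ?y = "Q\<^sup>T *\<^sub>v x"
  have y: "?y \<in> carrier_vec d" using QT x by auto
  have Dy: "diagm d g *\<^sub>v ?y \<in> carrier_vec d" using mult_mat_vec_carrier[OF diagm_carrier y] .
  have "((Q * diagm d g * Q\<^sup>T) *\<^sub>v x) \<bullet> ((Q * diagm d g * Q\<^sup>T) *\<^sub>v x) = (diagm d g *\<^sub>v ?y) \<bullet> (diagm d g *\<^sub>v ?y)"
    unfolding QD_vec[OF Q QQ1 QQ2 x] using Q_pres[OF Q QQ1 QQ2 Dy Dy] .
  also have "\<dots> = (\<Sum>i<d. (g i)^2 * (?y$i)^2)"
    unfolding diagm_mult_vec[OF y] by (auto simp: scalar_prod_def lessThan_atLeast0 power2_eq_square intro!: sum.cong)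
  finally show ?thesis .
qed

lemma op_norm_QD:
  assumes g: "\<And>i. i < d \<Longrightarrow> 0 \<le> g i \<and> g i \<le> \<tau>" and tau: "0 \<le> \<tau>"
  shows "op_norm (Q * diagm d g * Q\<^sup>T) \<le> \<tau>" "\<And>i. i < d \<Longrightarrow> g i \<le> op_norm (Q * diagm d g * Q\<^sup>T)"
proof -
  let ?M = "Q * diagm d g * Q\<^sup>T"
  have QT: "Q\<^sup>T \<in> carrier_mat d d" using Q by auto
  have dc: "dim_col ?M = d" using Q by simp
  define X where "X = {sqrt ((?M *\<^sub>v x) \<bullet> (?M *\<^sub>v x)) | x. x \<in> carrier_vec (dim_col ?M) \<and> x \<bullet> x \<le> 1}"
  have opX: "op_norm ?M = Sup X" unfolding op_norm_def X_def ..
  have bound: "s \<le> \<tau>" if "s \<in> X" for s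
  proof -
    from that obtain x where x: "x \<in> carrier_vec d" "x \<bullet> x \<le> 1" and s: "s = sqrt ((?M *\<^sub>v x) \<bullet> (?M *\<^sub>v x))"
      unfolding X_def dc by auto
    let ?y = "Q\<^sup>T *\<^sub>v x"
    have y: "?y \<in> carrier_vec d" using QT x by auto
    have "(?M *\<^sub>v x) \<bullet> (?M *\<^sub>v x) = (\<Sum>i<d. (g i)^2 * (?y$i)^2)" using QD_norm2[OF x(1)] .
    also have "\<dots> \<le> (\<Sum>i<d. \<tau>^2 * (?y$i)^2)"
      by (rule sum_mono, rule mult_right_mono, insert g, auto intro!: power_mono)
    also have "\<dots> = \<tau>^2 * (?y \<bullet> ?y)" using y Q
      by (auto simp: scalar_prod_def sum_distrib_left lessThan_atLeast0 power2_eq_square intro!: sum.cong)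
    also have "?y \<bullet> ?y = x \<bullet> x" using QT_pres[OF Q QQ1 QQ2 x(1) x(1)] .
    also have "\<tau>^2 * (x \<bullet> x) \<le> \<tau>^2" using x(2) by (simp add: mult_left_le)
    finally have "(?M *\<^sub>v x) \<bullet> (?M *\<^sub>v x) \<le> \<tau>^2" .
    hence "s \<le> sqrt (\<tau>^2)" unfolding s by (rule real_sqrt_le_mono)
    thus ?thesis using tau by simp
  qed
  have ne: "X \<noteq> {}" unfolding X_def dc by (auto intro!: exI[of _ "0\<^sub>v d"])
  show "op_norm ?M \<le> \<tau>" unfolding opX by (rule cSup_least[OF ne], rule bound)
  fix i assume i: "i < d"
  let ?x = "Q *\<^sub>v unit_vec d i"
  have x: "?x \<in> carrier_vec d" using Q by auto
  have xx: "?x \<bullet> ?x = 1" using Q_pres[OF Q QQ1 QQ2, of "unit_vec d i" "unit_vec d i"] i by simp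
  have yx: "Q\<^sup>T *\<^sub>v ?x = unit_vec d i"
    using assoc_mult_mat_vec[OF QT Q unit_vec_carrier, of i, symmetric] QQ1 by simp
  have "(?M *\<^sub>v ?x) \<bullet> (?M *\<^sub>v ?x) = (\<Sum>j<d. (g j)^2 * ((unit_vec d i)$j)^2)"
    using QD_norm2[OF x] unfolding yx .
  also have "\<dots> = (\<Sum>j<d. if j = i then (g j)^2 else 0)" by (rule sum.cong, auto simp: unit_vec_def)
  also have "\<dots> = (g i)^2" using i by simp
  finally have "sqrt ((?M *\<^sub>v ?x) \<bullet> (?M *\<^sub>v ?x)) = g i" using g[OF i] by simp
  hence "g i \<in> X" unfolding X_def dc using x xx by force
  moreover have "bdd_above X" using bound by (auto simp: bdd_above_def)
  ultimately show "g i \<le> op_norm ?M" unfolding opX by (rule cSup_upper)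
qed

end


lemma step:
  fixes S S1 S2 :: "real mat" and \<tau> :: real
  assumes cs: "cov_splitting d S S1 S2" and tau: "\<tau> > 0"
  shows "\<exists>S1' S2'. cov_splitting d S S1' S2' \<and>
     real (vec_space.rank d S1') \<le> real (vec_space.rank d S1) + mat_trace (S2*S2) / \<tau>^2 \<and>
     mat_trace S2 - mat_trace (S2*S2) / \<tau> \<le> mat_trace S2' \<and> mat_trace S2' \<le> mat_trace S2 \<and>
     mat_trace (S2'*S2') \<le> mat_trace (S2*S2) \<and>
     (0 < mat_trace S2' \<longrightarrow> 0 < op_norm S2' \<and> op_norm S2' \<le> \<tau> \<and> 0 < mat_trace (S2'*S2')) \<and>
     0 \<le> mat_trace S2 \<and> 0 \<le> mat_trace (S2*S2) \<and> 0 \<le> mat_trace S2'"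
proof -
  from cs have S1: "S1 \<in> carrier_mat d d" and S2: "S2 \<in> carrier_mat d d" and p1: "psd S1" and p2: "psd S2"
    and SS: "S = S1 + S2" and orth: "\<And>u v. u \<in> col_space S1 \<Longrightarrow> v \<in> col_space S2 \<Longrightarrow> u \<bullet> v = 0"
    unfolding cov_splitting_def by auto
  have S2s: "S2\<^sup>T = S2" using p2 unfolding psd_def by auto
  obtain Q l where Q: "Q \<in> carrier_mat d d" and QQ1: "Q\<^sup>T * Q = 1\<^sub>m d" and QQ2: "Q * Q\<^sup>T = 1\<^sub>m d"
    and QSQ: "Q\<^sup>T * S2 * Q = diagm d l" using spectral[OF S2 S2s] by auto
  have QT: "Q\<^sup>T \<in> carrier_mat d d" using Q by auto
  have QDc: "\<And>f. Q * diagm d f * Q\<^sup>T \<in> carrier_mat d d"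
    using mult_carrier_mat[OF mult_carrier_mat[OF Q diagm_carrier] QT] .
  have S2eq: "S2 = Q * diagm d l * Q\<^sup>T"
  proof -
    have "Q * diagm d l * Q\<^sup>T = (Q * Q\<^sup>T) * S2 * (Q * Q\<^sup>T)" unfolding QSQ[symmetric]
      by (simp only: assoc_mult_mat[OF Q mult_carrier_mat[OF QT S2] Q] assoc_mult_mat[OF QT S2 Q]
        assoc_mult_mat[OF Q mult_carrier_mat[OF mult_carrier_mat[OF QT S2] Q] QT]
        assoc_mult_mat[OF mult_carrier_mat[OF QT S2] Q QT] assoc_mult_mat[OF QT S2 mult_carrier_mat[OF Q QT]]
        assoc_mult_mat[OF mult_carrier_mat[OF Q QT] S2 mult_carrier_mat[OF Q QT]]
        assoc_mult_mat[OF Q QT mult_carrier_mat[OF S2 mult_carrier_mat[OF Q QT]]]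
        assoc_mult_mat[OF Q mult_carrier_mat[OF QT mult_carrier_mat[OF S2 Q]] QT]
        assoc_mult_mat[OF QT mult_carrier_mat[OF S2 Q] QT] assoc_mult_mat[OF S2 Q QT])
    thus ?thesis unfolding QQ2 using S2 by simp
  qed
  have lnn: "l i \<ge> 0" if i: "i < d" for i
  proof -
    have "unit_vec d i \<bullet> (diagm d l *\<^sub>v unit_vec d i) = (\<Sum>k<d. l k * ((unit_vec d i)$k)^2)"
      by (rule quad_diagm, simp)
    also have "\<dots> = (\<Sum>k<d. if k = i then l k else 0)" by (rule sum.cong, auto simp: unit_vec_def)
    also have "\<dots> = l i" using i by simp
    finally have "l i = unit_vec d i \<bullet> ((Q\<^sup>T * S2 * Q) *\<^sub>v unit_vec d i)" unfolding QSQ ..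
    also have "\<dots> = (Q *\<^sub>v unit_vec d i) \<bullet> (S2 *\<^sub>v (Q *\<^sub>v unit_vec d i))"
      by (rule quad_congr[OF Q S2], simp)
    also have "\<dots> \<ge> 0" using p2 Q S2 unfolding psd_def by auto
    finally show ?thesis .
  qed
  define lb where "lb = (\<lambda>i. if l i > \<tau> then l i else 0)"
  define ls where "ls = (\<lambda>i. if l i > \<tau> then 0 else l i)"
  define lq where "lq = (\<lambda>i. if l i > \<tau> then 0 else (1::real))"
  define B where "B = Q * diagm d lb * Q\<^sup>T"
  define S2' where "S2' = Q * diagm d ls * Q\<^sup>T"
  define S1' where "S1' = S1 + B"
  have B: "B \<in> carrier_mat d d" unfolding B_def using Q by auto
  have S2': "S2' \<in> carrier_mat d d" unfolding S2'_def using Q by auto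
  have S1': "S1' \<in> carrier_mat d d" unfolding S1'_def using S1 B by auto
  have S2split: "S2 = B + S2'" unfolding B_def S2'_def QD_add[OF Q QQ1 QQ2] S2eq
    by (rule arg_cong[where f = "\<lambda>f. Q * diagm d f * Q\<^sup>T"], auto simp: lb_def ls_def)
  have SS': "S = S1' + S2'" unfolding SS S1'_def S2split using S1 B S2' by simp
  have pB: "psd B" unfolding B_def by (rule psd_QDQ[OF Q], insert lnn, auto simp: lb_def)
  have pS2': "psd S2'" unfolding S2'_def by (rule psd_QDQ[OF Q], insert lnn, auto simp: ls_def)
  have pS1': "psd S1'" unfolding S1'_def by (rule psd_add[OF p1 pB S1 B])
  have orth': "u \<bullet> v = 0" if u: "u \<in> col_space S1'" and v: "v \<in> col_space S2'" for u v
  proof -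
    from u obtain a where a: "a \<in> carrier_vec d" and ua: "u = S1' *\<^sub>v a"
      unfolding col_space_def using S1' by auto
    from v obtain b where b: "b \<in> carrier_vec d" and vb: "v = S2' *\<^sub>v b"
      unfolding col_space_def using S2' by auto
    define c where "c = (Q * diagm d lq * Q\<^sup>T) *\<^sub>v b"
    have c: "c \<in> carrier_vec d" unfolding c_def using mult_mat_vec_carrier[OF QDc b] .
    have "S2 *\<^sub>v c = (S2 * (Q * diagm d lq * Q\<^sup>T)) *\<^sub>v b"
      unfolding c_def by (rule assoc_mult_mat_vec[OF S2 QDc b, symmetric])
    also have "S2 * (Q * diagm d lq * Q\<^sup>T) = S2'" unfolding S2eq QD_mult[OF Q QQ1 QQ2] S2'_def
      by (rule arg_cong[where f = "\<lambda>f. Q * diagm d f * Q\<^sup>T"], auto simp: lq_def ls_def)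
    finally have e: "S2 *\<^sub>v c = S2' *\<^sub>v b" .
    have dc: "dim_col S2 = d" using S2 by auto
    have vS2: "v \<in> col_space S2" unfolding vb col_space_def dc using c e[symmetric] by blast
    have u1: "S1 *\<^sub>v a \<in> col_space S1" unfolding col_space_def using a S1 by auto
    have "u = S1 *\<^sub>v a + B *\<^sub>v a" unfolding ua S1'_def using S1 B a by (simp add: add_mult_distrib_mat_vec[of _ d d])
    hence "u \<bullet> v = (S1 *\<^sub>v a) \<bullet> v + (B *\<^sub>v a) \<bullet> v"
      using add_scalar_prod_distrib[OF mult_mat_vec_carrier[OF S1 a] mult_mat_vec_carrier[OF B a], of v] vb
        mult_mat_vec_carrier[OF S2' b] by simp
    also have "(S1 *\<^sub>v a) \<bullet> v = 0" by (rule orth[OF u1 vS2])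
    also have "(B *\<^sub>v a) \<bullet> v = 0"
    proof -
      have ya: "Q\<^sup>T *\<^sub>v a \<in> carrier_vec d" and yb: "Q\<^sup>T *\<^sub>v b \<in> carrier_vec d" using QT a b by auto
      have "(B *\<^sub>v a) \<bullet> v = (diagm d lb *\<^sub>v (Q\<^sup>T *\<^sub>v a)) \<bullet> (diagm d ls *\<^sub>v (Q\<^sup>T *\<^sub>v b))"
        unfolding vb B_def S2'_def QD_vec[OF Q QQ1 QQ2 a] QD_vec[OF Q QQ1 QQ2 b]
        by (rule Q_pres[OF Q QQ1 QQ2], auto intro: mult_mat_vec_carrier[OF diagm_carrier] ya yb)
      also have "\<dots> = 0" unfolding diagm_mult_vec[OF ya] diagm_mult_vec[OF yb]
        by (simp add: scalar_prod_def lb_def ls_def)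
      finally show ?thesis .
    qed
    finally show ?thesis by simp
  qed
  have cs': "cov_splitting d S S1' S2'" unfolding cov_splitting_def
    using S1' S2' pS1' pS2' SS' orth' by auto
  have tr: "mat_trace S2 = (\<Sum>i<d. l i)" unfolding S2eq QD_trace[OF Q QQ1 QQ2] ..
  have qr: "mat_trace (S2 * S2) = (\<Sum>i<d. l i * l i)" unfolding S2eq QD_mult[OF Q QQ1 QQ2] QD_trace[OF Q QQ1 QQ2] ..
  have tr': "mat_trace S2' = (\<Sum>i<d. ls i)" unfolding S2'_def QD_trace[OF Q QQ1 QQ2] ..
  have qr': "mat_trace (S2' * S2') = (\<Sum>i<d. ls i * ls i)" unfolding S2'_def QD_mult[OF Q QQ1 QQ2] QD_trace[OF Q QQ1 QQ2] ..
  let ?K = "{k. k < d \<and> lb k \<noteq> 0}"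
  have rB: "vec_space.rank d B \<le> card ?K" unfolding B_def by (rule rank_QDQ[OF Q])
  have r1: "vec_space.rank d S1' \<le> vec_space.rank d S1 + vec_space.rank d B"
    unfolding S1'_def by (rule vec_space.rank_subadditive[OF S1 B])
  have cardK: "real (card ?K) * \<tau>^2 \<le> mat_trace (S2 * S2)"
  proof -
    have "real (card ?K) * \<tau>^2 = (\<Sum>k\<in>?K. \<tau>^2)" by simp
    also have "\<dots> \<le> (\<Sum>k\<in>?K. l k * l k)"
    proof (rule sum_mono)
      fix k assume "k \<in> ?K"
      hence "l k > \<tau>" unfolding lb_def by (auto split: if_splits)
      thus "\<tau>^2 \<le> l k * l k" using tau by (simp add: power2_eq_square mult_mono less_imp_le)
    qed
    also have "\<dots> \<le> (\<Sum>k<d. l k * l k)" by (rule sum_mono2, auto)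
    finally show ?thesis unfolding qr .
  qed
  have rank': "real (vec_space.rank d S1') \<le> real (vec_space.rank d S1) + mat_trace (S2*S2) / \<tau>^2"
  proof -
    have "real (card ?K) \<le> mat_trace (S2*S2) / \<tau>^2" using cardK tau by (simp add: field_simps)
    thus ?thesis using r1 rB by linarith
  qed
  have t1: "mat_trace S2 - mat_trace (S2*S2) / \<tau> \<le> mat_trace S2'"
  proof -
    have "mat_trace S2 - mat_trace S2' = (\<Sum>i<d. lb i)" unfolding tr tr'
      by (simp add: sum_subtractf[symmetric] lb_def ls_def, rule sum.cong, auto)
    also have "\<dots> \<le> (\<Sum>i<d. l i * l i / \<tau>)"
    proof (rule sum_mono)
      fix i assume "i \<in> {..<d}"
      show "lb i \<le> l i * l i / \<tau>"
      proof (cases "l i > \<tau>")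
        case True
        hence "l i * \<tau> \<le> l i * l i" using tau by (intro mult_left_mono) auto
        thus ?thesis using True tau unfolding lb_def by (simp add: field_simps)
      qed (insert tau, auto simp: lb_def)
    qed
    also have "\<dots> = mat_trace (S2*S2) / \<tau>" unfolding qr by (simp add: sum_divide_distrib)
    finally show ?thesis by simp
  qed
  have t2: "mat_trace S2' \<le> mat_trace S2" unfolding tr tr'
    by (rule sum_mono, insert lnn, auto simp: ls_def)
  have q2: "mat_trace (S2'*S2') \<le> mat_trace (S2*S2)" unfolding qr qr'
    by (rule sum_mono, insert lnn, auto simp: ls_def)
  have op: "0 < op_norm S2' \<and> op_norm S2' \<le> \<tau> \<and> 0 < mat_trace (S2'*S2')" if pos: "0 < mat_trace S2'"
  proof -
    have "\<exists>i<d. ls i > 0"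
    proof (rule ccontr)
      assume "\<not> ?thesis"
      hence "\<forall>i<d. ls i \<le> 0" by force
      hence "mat_trace S2' \<le> 0" unfolding tr' by (intro sum_nonpos) auto
      thus False using pos by simp
    qed
    then obtain i where i: "i < d" "ls i > 0" by blast
    have g: "\<And>i. i < d \<Longrightarrow> 0 \<le> ls i \<and> ls i \<le> \<tau>" using lnn tau by (auto simp: ls_def)
    have "ls i \<le> op_norm S2'" unfolding S2'_def using op_norm_QD(2)[OF Q QQ1 QQ2 g _ i(1)] tau by auto
    moreover have "op_norm S2' \<le> \<tau>" unfolding S2'_def using op_norm_QD(1)[OF Q QQ1 QQ2 g] tau by auto
    moreover have "0 < mat_trace (S2'*S2')"
    proof -
      have "0 < ls i * ls i" using i by simp
      also have "\<dots> \<le> (\<Sum>i<d. ls i * ls i)" by (rule member_le_sum, insert i, auto)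
      finally show ?thesis unfolding qr' .
    qed
    ultimately show ?thesis using i by auto
  qed
  have nn: "0 \<le> mat_trace S2" "0 \<le> mat_trace (S2*S2)" "0 \<le> mat_trace S2'"
    unfolding tr qr tr' using lnn by (auto intro!: sum_nonneg simp: ls_def)
  show ?thesis using cs' rank' t1 t2 q2 op nn by blast
qed


lemma alg:
  fixes t q n g \<tau> :: real
  assumes t: "t > 0" and q: "q > 0" and n: "n > 0"
    and g: "g = sqrt (sqrt ((t^2/q)/n))" and tau: "\<tau> = t / (n * g)"
  shows "g > 0" "g^4 = (t^2/q)/n" "q/\<tau>^2 = n/g^2" "q/\<tau> = t/g^3" "t/\<tau> = n*g"
proof -
  define f where "f = (t^2/q)/n"
  have f: "f > 0" unfolding f_def using t q n by simp
  show gp: "g > 0" unfolding g f_def[symmetric] using f by simp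
  have g4: "g^4 = f"
  proof -
    have "g^4 = ((sqrt (sqrt f))^2)^2" unfolding g f_def[symmetric] by (simp add: power_mult[symmetric])
    also have "\<dots> = f" using f by simp
    finally show ?thesis .
  qed
  thus "g^4 = (t^2/q)/n" unfolding f_def .
  have qe: "q = t^2 / (g^4 * n)" unfolding g4 f_def using q n t by (simp add: field_simps)
  show "q/\<tau>^2 = n/g^2" unfolding qe tau using t n gp by (simp add: field_simps power2_eq_square power4_eq_xxxx)
  show "q/\<tau> = t/g^3" unfolding qe tau using t n gp by (simp add: field_simps power2_eq_square power3_eq_cube power4_eq_xxxx)
  show "t/\<tau> = n*g" unfolding tau using t n gp by (simp add: field_simps)
qed



theorem theorem8:
  fixes \<Sigma> :: "nat \<Rightarrow> real mat" and d :: "nat \<Rightarrow> nat"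
  assumes dims: "\<And>n. \<Sigma> n \<in> carrier_mat (d n) (d n)"
    and psd: "\<And>n. psd (\<Sigma> n)"
    and split: "\<exists>S1 S2 :: nat \<Rightarrow> real mat.
        (\<forall>n. cov_splitting (d n) (\<Sigma> n) (S1 n) (S2 n)) \<and>
        (\<lambda>n. real (vec_space.rank (d n) (S1 n))) \<in> o(\<lambda>n. real n) \<and>
        (\<lambda>n. mat_trace (S2 n)) \<in> o(\<lambda>n. real n) \<and>
        (\<lambda>n. (mat_trace (S2 n))\<^sup>2 / mat_trace (S2 n * S2 n)) \<in> \<omega>(\<lambda>n. real n)"
  shows "\<exists>S1 S2 :: nat \<Rightarrow> real mat.
        (\<forall>n. cov_splitting (d n) (\<Sigma> n) (S1 n) (S2 n)) \<and>
        (\<lambda>n. real (vec_space.rank (d n) (S1 n))) \<in> o(\<lambda>n. real n) \<and>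
        (\<lambda>n. mat_trace (S2 n)) \<in> o(\<lambda>n. real n) \<and>
        (\<lambda>n. mat_trace (S2 n) / op_norm (S2 n)) \<in> \<omega>(\<lambda>n. real n) \<and>
        (\<lambda>n. (mat_trace (S2 n))\<^sup>2 / mat_trace (S2 n * S2 n)) \<in> \<omega>(\<lambda>n. real n)"
proof -
  from split obtain S1 S2 :: "nat \<Rightarrow> real mat" where
    cs: "\<forall>n. cov_splitting (d n) (\<Sigma> n) (S1 n) (S2 n)" and
    hrk: "(\<lambda>n. real (vec_space.rank (d n) (S1 n))) \<in> o(\<lambda>n. real n)" and
    htr: "(\<lambda>n. mat_trace (S2 n)) \<in> o(\<lambda>n. real n)" and
    hr: "(\<lambda>n. (mat_trace (S2 n))\<^sup>2 / mat_trace (S2 n * S2 n)) \<in> \<omega>(\<lambda>n. real n)"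
    by blast
  define t where "t n = mat_trace (S2 n)" for n
  define q where "q n = mat_trace (S2 n * S2 n)" for n
  define r where "r n = (t n)^2 / q n" for n
  define g where "g n = sqrt (sqrt ((t n ^ 2 / q n) / real n))" for n
  define G where "G n \<longleftrightarrow> 0 < n \<and> 0 < t n \<and> 0 < q n" for n
  define \<tau> where "\<tau> n = (if G n then t n / (real n * g n) else 1)" for n
  have alg': "g n > 0 \<and> g n ^ 4 = r n / real n \<and> q n / (\<tau> n)^2 = real n / (g n)^2 \<and>
     q n / \<tau> n = t n / (g n)^3 \<and> t n / \<tau> n = real n * g n \<and> \<tau> n = t n / (real n * g n)" if "G n" for n
  proof -
    have p: "t n > 0" "q n > 0" "real n > 0" using that unfolding G_def by auto
    have tn: "\<tau> n = t n / (real n * g n)" unfolding \<tau>_def using that by simp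
    show ?thesis using alg[OF p g_def tn] tn unfolding r_def by auto
  qed
  have taupos: "\<tau> n > 0" for n
  proof (cases "G n")
    case True
    thus ?thesis using alg'[OF True] unfolding G_def by (auto intro!: divide_pos_pos)
  qed (simp add: \<tau>_def)
  define P where "P n A B \<longleftrightarrow> cov_splitting (d n) (\<Sigma> n) A B \<and>
     real (vec_space.rank (d n) A) \<le> real (vec_space.rank (d n) (S1 n)) + q n / (\<tau> n)^2 \<and>
     t n - q n / \<tau> n \<le> mat_trace B \<and> mat_trace B \<le> t n \<and>
     mat_trace (B*B) \<le> q n \<and>
     (0 < mat_trace B \<longrightarrow> 0 < op_norm B \<and> op_norm B \<le> \<tau> n \<and> 0 < mat_trace (B*B)) \<and>
     0 \<le> t n \<and> 0 \<le> q n \<and> 0 \<le> mat_trace B" for n A B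
  have "\<forall>n. \<exists>A B. P n A B"
    using step[OF cs[rule_format] taupos] unfolding P_def t_def q_def by blast
  then obtain A B where AB: "\<And>n. P n (A n) (B n)" by metis
  have tnn: "0 \<le> t n" and qnn: "0 \<le> q n" for n using AB[of n] unfolding P_def by auto
  have rnn: "0 \<le> r n" for n unfolding r_def using qnn[of n] by simp
  have EvF: "eventually (\<lambda>n. G n \<and> K \<le> r n / real n) sequentially" if K: "K > 0" for K
  proof -
    have e1: "eventually (\<lambda>n. K * norm (real n) \<le> norm (r n)) sequentially"
      using landau_omega.smallD[OF hr K] unfolding r_def t_def q_def .
    have e2: "eventually (\<lambda>n. n \<ge> 1) sequentially" by (rule eventually_ge_at_top)
    show ?thesis
    proof (rule eventually_mono[OF eventually_conj[OF e1 e2]])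
      fix n assume h: "K * norm (real n) \<le> norm (r n) \<and> 1 \<le> n"
      hence n: "real n > 0" "n > 0" by auto
      have "K * real n \<le> r n" using h rnn[of n] by simp
      moreover have "K * real n > 0" using K n by simp
      ultimately have rpos: "r n > 0" by linarith
      have "t n \<noteq> 0" "q n \<noteq> 0" using rpos unfolding r_def by auto
      hence "G n" unfolding G_def using tnn[of n] qnn[of n] n by auto
      moreover have "K \<le> r n / real n" using \<open>K * real n \<le> r n\<close> n by (simp add: field_simps)
      ultimately show "G n \<and> K \<le> r n / real n" by blast
    qed
  qed
  have T1: "(\<lambda>n. real (vec_space.rank (d n) (A n))) \<in> o(\<lambda>n. real n)"
  proof (rule landau_o.smallI)
    fix c :: real assume c: "c > 0"
    have e1: "eventually (\<lambda>n. norm (real (vec_space.rank (d n) (S1 n))) \<le> (c/2) * norm (real n)) sequentially"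
      using landau_o.smallD[OF hrk, of "c/2"] c by simp
    have e2: "eventually (\<lambda>n. G n \<and> (2/c)^2 \<le> r n / real n) sequentially" by (rule EvF, insert c, simp)
    show "eventually (\<lambda>n. norm (real (vec_space.rank (d n) (A n))) \<le> c * norm (real n)) sequentially"
    proof (rule eventually_mono[OF eventually_conj[OF e1 e2]])
      fix n assume h: "norm (real (vec_space.rank (d n) (S1 n))) \<le> (c/2) * norm (real n) \<and> G n \<and> (2/c)^2 \<le> r n / real n"
      hence G: "G n" by blast
      have gp: "g n > 0" and g4: "g n ^ 4 = r n / real n" and q2: "q n / (\<tau> n)^2 = real n / (g n)^2"
        using alg'[OF G] by auto
      have n: "real n > 0" using G unfolding G_def by auto
      have e4: "((g n)^2)^2 = g n ^ 4" by (simp flip: power_mult)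
      have "((g n)^2)^2 \<ge> (2/c)^2" unfolding e4 g4 using h by blast
      hence g2: "(g n)^2 \<ge> 2/c" by (rule power2_le_imp_le) simp
      have "real n / (g n)^2 \<le> real n / (2/c)"
        by (rule divide_left_mono[OF g2], insert n c gp, auto)
      also have "\<dots> = (c/2) * real n" by simp
      finally have "q n / (\<tau> n)^2 \<le> (c/2) * real n" unfolding q2 .
      moreover have "real (vec_space.rank (d n) (A n)) \<le> real (vec_space.rank (d n) (S1 n)) + q n / (\<tau> n)^2"
        using AB[of n] unfolding P_def by blast
      moreover have "real (vec_space.rank (d n) (S1 n)) \<le> (c/2) * real n" using h by simp
      ultimately have "real (vec_space.rank (d n) (A n)) \<le> c * real n" by linarith
      thus "norm (real (vec_space.rank (d n) (A n))) \<le> c * norm (real n)" by simp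
    qed
  qed
  have T2: "(\<lambda>n. mat_trace (B n)) \<in> o(\<lambda>n. real n)"
  proof (rule landau_o.smallI)
    fix c :: real assume c: "c > 0"
    show "eventually (\<lambda>n. norm (mat_trace (B n)) \<le> c * norm (real n)) sequentially"
    proof (rule eventually_mono[OF landau_o.smallD[OF htr c]])
      fix n assume "norm (mat_trace (S2 n)) \<le> c * norm (real n)"
      moreover have "0 \<le> mat_trace (B n)" "mat_trace (B n) \<le> t n" using AB[of n] unfolding P_def by auto
      ultimately show "norm (mat_trace (B n)) \<le> c * norm (real n)" unfolding t_def by simp
    qed
  qed
  have half: "t n / 2 \<le> mat_trace (B n)" if G: "G n" and g2: "2 \<le> g n" for n
  proof -
    have gp: "g n > 0" and qt: "q n / \<tau> n = t n / (g n)^3" using alg'[OF G] by auto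
    have tp: "t n > 0" using G unfolding G_def by auto
    have "(2::real)^3 \<le> (g n)^3" by (rule power_mono[OF g2], simp)
    hence "2 \<le> (g n)^3" by simp
    hence "t n / (g n)^3 \<le> t n / 2" using tp gp by (intro divide_left_mono) auto
    moreover have "t n - q n / \<tau> n \<le> mat_trace (B n)" using AB[of n] unfolding P_def by blast
    ultimately show ?thesis unfolding qt by linarith
  qed
  have groot: "M \<le> g n" if G: "G n" and M: "M > 0" and f: "M^4 \<le> r n / real n" for n M
  proof -
    have gp: "g n > 0" and g4: "g n ^ 4 = r n / real n" using alg'[OF G] by auto
    show ?thesis by (rule power_le_imp_le_base[of _ 3], insert f g4 gp, auto)
  qed
  have T3: "(\<lambda>n. mat_trace (B n) / op_norm (B n)) \<in> \<omega>(\<lambda>n. real n)"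
  proof (rule landau_omega.smallI)
    fix C :: real assume C: "C > 0"
    define M where "M = max 2 (2 * C)"
    have M: "M > 0" unfolding M_def by simp
    show "eventually (\<lambda>n. C * norm (real n) \<le> norm (mat_trace (B n) / op_norm (B n))) sequentially"
    proof (rule eventually_mono[OF EvF[of "M^4"]])
      show "0 < M^4" using M by simp
      fix n assume h: "G n \<and> M^4 \<le> r n / real n"
      hence G: "G n" by blast
      have gM: "M \<le> g n" using groot[OF G M] h by blast
      have gp: "g n > 0" and tt: "t n / \<tau> n = real n * g n" using alg'[OF G] by auto
      have tp: "t n > 0" using G unfolding G_def by auto
      have g2: "2 \<le> g n" using gM unfolding M_def by simp
      have B1: "t n / 2 \<le> mat_trace (B n)" by (rule half[OF G g2])
      hence Bp: "0 < mat_trace (B n)" using tp by linarith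
      hence op: "0 < op_norm (B n)" "op_norm (B n) \<le> \<tau> n" using AB[of n] unfolding P_def by auto
      have "C * real n \<le> real n * g n / 2" using gM unfolding M_def
        by (cases "n = 0") (auto simp: field_simps intro: order_trans[OF _ mult_left_mono[of _ "g n"]])
      also have "\<dots> = (t n / 2) / \<tau> n" using tt by (simp add: field_simps)
      also have "\<dots> \<le> mat_trace (B n) / \<tau> n" by (rule divide_right_mono[OF B1], insert taupos[of n], simp)
      also have "\<dots> \<le> mat_trace (B n) / op_norm (B n)"
        by (rule divide_left_mono, insert op Bp, auto)
      finally show "C * norm (real n) \<le> norm (mat_trace (B n) / op_norm (B n))" using op Bp by simp
    qed
  qed
  have T4: "(\<lambda>n. (mat_trace (B n))\<^sup>2 / mat_trace (B n * B n)) \<in> \<omega>(\<lambda>n. real n)"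
  proof (rule landau_omega.smallI)
    fix C :: real assume C: "C > 0"
    define K where "K = max 16 (4 * C)"
    have K: "K > 0" unfolding K_def by simp
    show "eventually (\<lambda>n. C * norm (real n) \<le> norm ((mat_trace (B n))\<^sup>2 / mat_trace (B n * B n))) sequentially"
    proof (rule eventually_mono[OF EvF[OF K]])
      fix n assume h: "G n \<and> K \<le> r n / real n"
      hence G: "G n" by blast
      have n: "real n > 0" and tp: "t n > 0" and qp: "q n > 0" using G unfolding G_def by auto
      have "(2::real)^4 \<le> r n / real n" using h unfolding K_def by simp
      hence g2: "2 \<le> g n" using groot[OF G] by simp
      have B1: "t n / 2 \<le> mat_trace (B n)" by (rule half[OF G g2])
      hence Bp: "0 < mat_trace (B n)" using tp by linarith
      hence q': "0 < mat_trace (B n * B n)" "mat_trace (B n * B n) \<le> q n" using AB[of n] unfolding P_def by auto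
      have "C * real n \<le> (r n / real n) / 4 * real n" using h n unfolding K_def by (simp add: field_simps)
      also have "\<dots> = (t n / 2)^2 / q n" unfolding r_def using n by (simp add: field_simps power2_eq_square)
      also have "\<dots> \<le> (mat_trace (B n))^2 / q n"
        by (rule divide_right_mono, rule power_mono[OF B1], insert tp qp, auto)
      also have "\<dots> \<le> (mat_trace (B n))^2 / mat_trace (B n * B n)"
        by (rule divide_left_mono, insert q', auto)
      finally show "C * norm (real n) \<le> norm ((mat_trace (B n))\<^sup>2 / mat_trace (B n * B n))" using q' by simp
    qed
  qed
  have T0: "\<forall>n. cov_splitting (d n) (\<Sigma> n) (A n) (B n)" using AB unfolding P_def by blast
  show ?thesis using T0 T1 T2 T3 T4 by blast
qed

end
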